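(* There exist $p\in\mathcal P$ and $x\in N$ such that $D_{\mu(p)}(p)=\{x\}\subseteq D_{\mu(p^r)}(p^r)$ if and only if $(h,n)\notin T_2$, where $T_2=\{(h,n): h=2\}\cup\{(h,n): n\le3\}\cup\{(4,4)\}$.
   Context: Let $n,h\ge2$ be integers, $N=\{1,\dots,n\}$, $H=\{1,\dots,h\}$. $\mathcal P$ is the set of $h$-tuples $p=(p_1,\dots,p_h)$ of linear orders on $N$; $p^r$ is obtained by reversing each $p_i$; $x>_{p_i}y$ means $x\ne y$ and $p_i$ ranks $x$ above $y$. For an integer $\mu$ with $h/2<\mu\le h$, $D_\mu(p)=\{x\in N: \forall y\in N,\ |\{i: y>_{p_i}x\}|<\mu\}$, and $\mu(p)=\min\{\mu\in\mathbb N\cap(h/2,h]: D_\mu(p)\neq\varnothing\}$. *)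

theory Defs
  imports Main
begin

text \<open>A linear order on N = {1..n} is a relation r with linear_order_on {1..n} r,
  where (a,b) in r means that b is ranked weakly above a.\<close>

definition is_profile :: "nat \<Rightarrow> nat \<Rightarrow> (nat \<Rightarrow> nat rel) \<Rightarrow> bool" where
  "is_profile n h p \<longleftrightarrow> (\<forall>i\<in>{1..h}. linear_order_on {1..n} (p i))"

definition above :: "nat rel \<Rightarrow> nat \<Rightarrow> nat \<Rightarrow> bool" where
  "above r x y \<longleftrightarrow> x \<noteq> y \<and> (y, x) \<in> r"

definition rev_profile :: "(nat \<Rightarrow> nat rel) \<Rightarrow> (nat \<Rightarrow> nat rel)" where
  "rev_profile p = (\<lambda>i. converse (p i))"

definition D :: "nat \<Rightarrow> nat \<Rightarrow> nat \<Rightarrow> (nat \<Rightarrow> nat rel) \<Rightarrow> nat set" where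
  "D n h mu p = {x \<in> {1..n}. \<forall>y\<in>{1..n}. card {i \<in> {1..h}. above (p i) y x} < mu}"

definition mu_of :: "nat \<Rightarrow> nat \<Rightarrow> (nat \<Rightarrow> nat rel) \<Rightarrow> nat" where
  "mu_of n h p = (LEAST mu. h < 2 * mu \<and> mu \<le> h \<and> D n h mu p \<noteq> {})"

end

theory Submission
  imports Defs
begin


definition cnt :: "nat \<Rightarrow> (nat \<Rightarrow> nat rel) \<Rightarrow> nat \<Rightarrow> nat \<Rightarrow> nat" where
  "cnt h p y x = card {i \<in> {1..h}. above (p i) y x}"

lemma lin_facts:
  assumes "is_profile n h p" "i \<in> {1..h}"
  shows "trans (p i)" "antisym (p i)"
        "\<And>x y. x \<in> {1..n} \<Longrightarrow> y \<in> {1..n} \<Longrightarrow> x \<noteq> y \<Longrightarrow> (x,y) \<in> p i \<or> (y,x) \<in> p i"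
  using assms unfolding is_profile_def linear_order_on_def partial_order_on_def preorder_on_def total_on_def
  by auto

lemma cnt_sum:
  assumes "is_profile n h p" "x \<in> {1..n}" "y \<in> {1..n}" "x \<noteq> y"
  shows "cnt h p y x + cnt h p x y = h"
proof -
  have d: "{i \<in> {1..h}. above (p i) y x} \<inter> {i \<in> {1..h}. above (p i) x y} = {}"
    using lin_facts(2)[OF assms(1)] unfolding above_def antisym_def by blast
  have u: "{i \<in> {1..h}. above (p i) y x} \<union> {i \<in> {1..h}. above (p i) x y} = {1..h}"
    using lin_facts(3)[OF assms(1) _ assms(2,3,4)] assms(4) unfolding above_def by blast
  show ?thesis unfolding cnt_def using card_Un_disjoint[of "{i \<in> {1..h}. above (p i) y x}" "{i \<in> {1..h}. above (p i) x y}"] d u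
    by simp
qed

lemma cnt_cycle:
  assumes "is_profile n h p"
  shows "cnt h p a b + cnt h p b c + cnt h p c a \<le> 2*h"
proof -
  have e: "\<And>P. card {i \<in> {1..h}. P i} = (\<Sum>i\<in>{1..h}. if P i then 1 else 0::nat)"
    by (simp add: sum.If_cases Int_def)
  have "cnt h p a b + cnt h p b c + cnt h p c a =
     (\<Sum>i\<in>{1..h}. (if above (p i) a b then 1 else 0) + (if above (p i) b c then 1 else 0) + (if above (p i) c a then 1 else 0::nat))"
    unfolding cnt_def e sum.distrib by simp
  also have "\<dots> \<le> (\<Sum>i\<in>{1..h}. 2)"
  proof (rule sum_mono)
    fix i assume i: "i \<in> {1..h}"
    have "\<not> (above (p i) a b \<and> above (p i) b c \<and> above (p i) c a)"
      using lin_facts(1,2)[OF assms i] unfolding above_def trans_def antisym_def by blast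
    then show "(if above (p i) a b then 1 else 0) + (if above (p i) b c then 1 else 0) + (if above (p i) c a then 1 else 0::nat) \<le> 2"
      by auto
  qed
  finally show ?thesis by simp
qed

lemma top_exists:
  assumes "is_profile n h p" "i \<in> {1..h}" "n \<ge> 1"
  shows "\<exists>t\<in>{1..n}. \<forall>y\<in>{1..n}. \<not> above (p i) y t"
proof -
  define g where "g t = card {z \<in> {1..n}. (z,t) \<in> p i}" for t
  obtain t where t: "t \<in> {1..n}" "\<forall>y\<in>{1..n}. g y \<le> g t"
  proof -
    have ne: "g ` {1..n} \<noteq> {}" using assms(3) by auto
    have "Max (g ` {1..n}) \<in> g ` {1..n}" using ne by (intro Max_in) auto
    then obtain t where "t \<in> {1..n}" "g t = Max (g ` {1..n})" by auto
    moreover have "\<forall>y\<in>{1..n}. g y \<le> Max (g ` {1..n})" by auto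
    ultimately show ?thesis using that by auto
  qed
  show ?thesis
  proof (intro bexI[OF _ t(1)] ballI notI)
    fix y assume y: "y \<in> {1..n}" and a: "above (p i) y t"
    have "{z \<in> {1..n}. (z,t) \<in> p i} \<subset> {z \<in> {1..n}. (z,y) \<in> p i}"
    proof
      show "{z \<in> {1..n}. (z,t) \<in> p i} \<subseteq> {z \<in> {1..n}. (z,y) \<in> p i}"
        using a lin_facts(1)[OF assms(1,2)] unfolding above_def trans_def by blast
      have "y \<notin> {z \<in> {1..n}. (z,t) \<in> p i}"
        using a lin_facts(2)[OF assms(1,2)] unfolding above_def antisym_def by blast
      moreover have "(y,y) \<in> p i" using assms y unfolding is_profile_def linear_order_on_def partial_order_on_def preorder_on_def refl_on_def by blast
      ultimately show "{z \<in> {1..n}. (z,t) \<in> p i} \<noteq> {z \<in> {1..n}. (z,y) \<in> p i}" using y by blast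
    qed
    then have "g t < g y" unfolding g_def by (intro psubset_card_mono) auto
    with t(2) y show False by force
  qed
qed

lemma D_cnt: "D n h mu p = {x\<in>{1..n}. \<forall>y\<in>{1..n}. cnt h p y x < mu}"
  by (simp add: D_def cnt_def)

lemma above_conv: "above (converse r) y x = above r x y"
  unfolding above_def by auto

lemma D_rev: "D n h mu (rev_profile p) = {x\<in>{1..n}. \<forall>y\<in>{1..n}. cnt h p x y < mu}"
  unfolding D_def cnt_def rev_profile_def by (simp add: above_conv)

lemma rev_prof: "is_profile n h p \<Longrightarrow> is_profile n h (rev_profile p)"
  by (simp add: is_profile_def rev_profile_def)

lemma top_in_Dh:
  assumes "i \<in> {1..h}" "t \<in> {1..n}" "\<forall>y\<in>{1..n}. \<not> above (p i) y t"
  shows "t \<in> D n h h p"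
proof -
  have "\<forall>y\<in>{1..n}. cnt h p y t < h"
  proof
    fix y assume "y \<in> {1..n}"
    then have "{j\<in>{1..h}. above (p j) y t} \<subseteq> {1..h} - {i}" using assms by auto
    then have "cnt h p y t \<le> card ({1..h} - {i})" unfolding cnt_def by (intro card_mono) auto
    also have "\<dots> = h - 1" using assms(1) by simp
    finally show "cnt h p y t < h" using assms(1) by auto
  qed
  then show ?thesis using assms(2) by (simp add: D_cnt)
qed

lemma Dh_ne:
  assumes "is_profile n h p" "n \<ge> 1" "h \<ge> 1"
  shows "D n h h p \<noteq> {}"
proof -
  obtain t where "t \<in> {1..n}" "\<forall>y\<in>{1..n}. \<not> above (p 1) y t"
    using top_exists[OF assms(1) _ assms(2), of 1] assms(3) by auto
  then have "t \<in> D n h h p" using top_in_Dh[of 1 h t n p] assms(3) by auto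
  then show ?thesis by auto
qed

lemma mu_props:
  assumes "is_profile n h p" "n \<ge> 1" "h \<ge> 1"
  shows "h < 2 * mu_of n h p" "mu_of n h p \<le> h" "D n h (mu_of n h p) p \<noteq> {}"
    "\<And>k. h < 2*k \<Longrightarrow> k < mu_of n h p \<Longrightarrow> D n h k p = {}"
proof -
  have ex: "h < 2 * h \<and> h \<le> h \<and> D n h h p \<noteq> {}" using Dh_ne[OF assms] assms(3) by simp
  have P: "h < 2 * mu_of n h p \<and> mu_of n h p \<le> h \<and> D n h (mu_of n h p) p \<noteq> {}"
    unfolding mu_of_def by (rule LeastI[of _ h]) (rule ex)
  then show "h < 2 * mu_of n h p" "mu_of n h p \<le> h" "D n h (mu_of n h p) p \<noteq> {}" by auto
  fix k assume "h < 2*k" "k < mu_of n h p"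
  then show "D n h k p = {}" using not_less_Least[of k "\<lambda>mu. h < 2 * mu \<and> mu \<le> h \<and> D n h mu p \<noteq> {}"] P
    unfolding mu_of_def by auto
qed

lemma lem_n2:
  fixes c :: "nat \<Rightarrow> nat \<Rightarrow> nat"
  assumes "x \<noteq> y"
  and sum: "\<forall>a\<in>{x,y}. \<forall>b\<in>{x,y}. a \<noteq> b \<longrightarrow> c a b + c b a = h"
  and c0: "\<forall>a. c a a = 0"
  and F1: "\<forall>v\<in>{x,y}. c v x < mu"
  and F2: "\<forall>v\<in>{x,y}. v \<noteq> x \<longrightarrow> (\<exists>w\<in>{x,y}. mu \<le> c w v)"
  and F3: "\<forall>v\<in>{x,y}. c x v < mu'"
  and F4: "h < 2*(mu'-1) \<longrightarrow> (\<forall>w\<in>{x,y}. \<exists>v\<in>{x,y}. mu'-1 \<le> c w v)"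
  and M: "h < 2*mu" "h < 2*mu'" "mu' \<le> h"
  shows False
proof -
  have s: "c x y + c y x = h" using sum assms(1) by auto
  have f1: "c y x < mu" using F1 by auto
  have f2: "mu \<le> c x y" using F2 assms(1) c0 M(1) by (auto simp: not_less[symmetric])
  have f3: "c x y < mu'" using F3 by auto
  show False
  proof (cases "h < 2*(mu'-1)")
    case True
    then have "mu'-1 \<le> c y x" using F4 c0 M by auto
    then show False using s f1 f2 f3 M by linarith
  next
    case False
    then show False using s f1 f2 f3 M by linarith
  qed
qed

lemma lem_n3:
  fixes c :: "nat \<Rightarrow> nat \<Rightarrow> nat"
  assumes "x \<noteq> y" "x \<noteq> z" "y \<noteq> z"
  and sum: "\<forall>a\<in>{x,y,z}. \<forall>b\<in>{x,y,z}. a \<noteq> b \<longrightarrow> c a b + c b a = h"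
  and c0: "\<forall>a. c a a = 0"
  and F1: "\<forall>v\<in>{x,y,z}. c v x < mu"
  and F2: "\<forall>v\<in>{x,y,z}. v \<noteq> x \<longrightarrow> (\<exists>w\<in>{x,y,z}. mu \<le> c w v)"
  and F3: "\<forall>v\<in>{x,y,z}. c x v < mu'"
  and F4: "h < 2*(mu'-1) \<longrightarrow> (\<forall>w\<in>{x,y,z}. \<exists>v\<in>{x,y,z}. mu'-1 \<le> c w v)"
  and M: "h < 2*mu" "h < 2*mu'" "mu' \<le> h"
  shows False
proof -
  have s: "c x y + c y x = h" "c x z + c z x = h" "c y z + c z y = h" using sum assms(1-3) by auto
  have f1: "c y x < mu" "c z x < mu" using F1 by auto
  have f2: "mu \<le> c x y \<or> mu \<le> c z y" "mu \<le> c x z \<or> mu \<le> c y z" using F2 assms(1-3) c0 M(1)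
    by (auto simp: not_less[symmetric])
  have f3: "c x y < mu'" "c x z < mu'" using F3 by auto
  show False
  proof (cases "h < 2*(mu'-1)")
    case True
    then have "mu'-1 \<le> c y x \<or> mu'-1 \<le> c y z" "mu'-1 \<le> c z x \<or> mu'-1 \<le> c z y"
      using F4 c0 M by auto
    then show False using s f1 f2 f3 M by linarith
  next
    case False
    then show False using s f1 f2 f3 M by linarith
  qed
qed

lemma lem_n44':
  fixes c :: "nat \<Rightarrow> nat \<Rightarrow> nat"
  assumes d: "x \<noteq> y" "x \<noteq> z" "y \<noteq> z" "x \<noteq> w" "y \<noteq> w" "z \<noteq> w"
  and sum: "\<forall>a\<in>{x,y,z,w}. \<forall>b\<in>{x,y,z,w}. a \<noteq> b \<longrightarrow> c a b + c b a = 4"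
  and cyc: "\<forall>a\<in>{x,y,z,w}. \<forall>b\<in>{x,y,z,w}. \<forall>e\<in>{x,y,z,w}. c a b + c b e + c e a \<le> 8"
  and c0: "\<forall>a. c a a = 0"
  and F1: "\<forall>v\<in>{x,y,z,w}. c v x < 3"
  and F2: "\<forall>v\<in>{x,y,z,w}. v \<noteq> x \<longrightarrow> (\<exists>u\<in>{x,y,z,w}. 3 \<le> c u v)"
  and F3: "\<forall>v\<in>{x,y,z,w}. c x v < mu'"
  and F4: "4 < 2*(mu'-1) \<longrightarrow> (\<forall>u\<in>{x,y,z,w}. \<exists>v\<in>{x,y,z,w}. mu'-1 \<le> c u v)"
  and M: "4 < 2*mu'" "mu' \<le> 4"
  shows False
proof -
  have s: "c z y + c y z = 4" "c w z + c z w = 4" "c y w + c w y = 4" using sum d by auto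
  have cy: "c y z + c z w + c w y \<le> 8" "c y w + c w z + c z y \<le> 8" using cyc by auto
  have mu: "mu' = 3 \<or> mu' = 4" using M by linarith
  then show False
  proof
    assume m3: "mu' = 3"
    have "\<exists>u\<in>{x,y,z,w}. 3 \<le> c u y" "\<exists>u\<in>{x,y,z,w}. 3 \<le> c u z" "\<exists>u\<in>{x,y,z,w}. 3 \<le> c u w"
      using F2 d by auto
    moreover have "c x y < 3" "c x z < 3" "c x w < 3" using F3 m3 by auto
    ultimately have "3 \<le> c z y \<or> 3 \<le> c w y" "3 \<le> c y z \<or> 3 \<le> c w z" "3 \<le> c z w \<or> 3 \<le> c y w"
      using c0 by auto
    then show False using s cy by (elim disjE) linarith+
  next
    assume m4: "mu' = 4"
    have "\<exists>v\<in>{x,y,z,w}. 3 \<le> c y v" "\<exists>v\<in>{x,y,z,w}. 3 \<le> c z v" "\<exists>v\<in>{x,y,z,w}. 3 \<le> c w v"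
      using F4 m4 by auto
    moreover have "c y x < 3" "c z x < 3" "c w x < 3" using F1 by auto
    ultimately have "3 \<le> c y z \<or> 3 \<le> c y w" "3 \<le> c z y \<or> 3 \<le> c z w" "3 \<le> c w y \<or> 3 \<le> c w z"
      using c0 by auto
    then show False using s cy by (elim disjE) linarith+
  qed
qed

lemma lem_n44:
  fixes c :: "nat \<Rightarrow> nat \<Rightarrow> nat"
  assumes hh: "h = 4" and d: "x \<noteq> y" "x \<noteq> z" "y \<noteq> z" "x \<noteq> w" "y \<noteq> w" "z \<noteq> w"
  and sum: "\<forall>a\<in>{x,y,z,w}. \<forall>b\<in>{x,y,z,w}. a \<noteq> b \<longrightarrow> c a b + c b a = h"
  and cyc: "\<forall>a\<in>{x,y,z,w}. \<forall>b\<in>{x,y,z,w}. \<forall>e\<in>{x,y,z,w}. c a b + c b e + c e a \<le> 8"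
  and c0: "\<forall>a. c a a = 0"
  and F1: "\<forall>v\<in>{x,y,z,w}. c v x < 3"
  and F2: "\<forall>v\<in>{x,y,z,w}. v \<noteq> x \<longrightarrow> (\<exists>u\<in>{x,y,z,w}. 3 \<le> c u v)"
  and F3: "\<forall>v\<in>{x,y,z,w}. c x v < mu'"
  and F4: "h < 2*(mu'-1) \<longrightarrow> (\<forall>u\<in>{x,y,z,w}. \<exists>v\<in>{x,y,z,w}. mu'-1 \<le> c u v)"
  and M: "h < 2*mu'" "mu' \<le> h"
  shows False
  using lem_n44'[OF d sum[unfolded hh] cyc c0 F1 F2 F3 F4[unfolded hh] M[unfolded hh]] .

lemma impossible:
  assumes prof: "is_profile n h p" and n2: "n \<ge> 2" and h2: "h \<ge> 2" and x: "x \<in> {1..n}"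
   and DD: "D n h (mu_of n h p) p = {x}"
   and xr: "x \<in> D n h (mu_of n h (rev_profile p)) (rev_profile p)"
   and T: "h = 2 \<or> n \<le> 3 \<or> (h = 4 \<and> n = 4)"
  shows False
proof -
  define mu where "mu = mu_of n h p"
  define mu' where "mu' = mu_of n h (rev_profile p)"
  have n1: "n \<ge> 1" and h1: "h \<ge> 1" using n2 h2 by auto
  note M = mu_props[OF prof n1 h1, folded mu_def]
  note M' = mu_props[OF rev_prof[OF prof] n1 h1, folded mu'_def]
  let ?N = "{1..n}"
  let ?c = "cnt h p"
  have F1: "\<forall>v\<in>?N. ?c v x < mu" using DD unfolding mu_def D_cnt by auto
  have F2: "\<forall>v\<in>?N. v \<noteq> x \<longrightarrow> (\<exists>w\<in>?N. mu \<le> ?c w v)"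
  proof (intro ballI impI)
    fix v assume v: "v \<in> ?N" "v \<noteq> x"
    then have "v \<notin> D n h mu p" using DD unfolding mu_def by auto
    then show "\<exists>w\<in>?N. mu \<le> ?c w v" using v unfolding D_cnt by (auto simp: not_less)
  qed
  have F3: "\<forall>v\<in>?N. ?c x v < mu'" using xr unfolding mu'_def D_rev by auto
  have F4: "h < 2*(mu'-1) \<longrightarrow> (\<forall>w\<in>?N. \<exists>v\<in>?N. mu'-1 \<le> ?c w v)"
  proof
    assume "h < 2*(mu'-1)"
    then have "D n h (mu'-1) (rev_profile p) = {}" using M'(4)[of "mu'-1"] by auto
    then show "\<forall>w\<in>?N. \<exists>v\<in>?N. mu'-1 \<le> ?c w v" unfolding D_rev by (auto simp: not_less)
  qed
  have c0: "\<forall>a. ?c a a = 0" by (simp add: cnt_def above_def)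
  have sum: "\<forall>a\<in>?N. \<forall>b\<in>?N. a \<noteq> b \<longrightarrow> ?c a b + ?c b a = h"
  proof (intro ballI impI)
    fix a b assume "a \<in> ?N" "b \<in> ?N" "a \<noteq> b"
    then show "?c a b + ?c b a = h" using cnt_sum[OF prof, of b a] by simp
  qed
  have F6: "mu \<noteq> h"
  proof
    assume mh: "mu = h"
    define v where "v = (if x = 1 then 2 else (1::nat))"
    have v: "v \<in> ?N" "v \<noteq> x" using n2 x unfolding v_def by auto
    have "\<forall>i\<in>{1..h}. above (p i) x v"
    proof
      fix i assume i: "i \<in> {1..h}"
      obtain t where t: "t \<in> ?N" "\<forall>y\<in>?N. \<not> above (p i) y t" using top_exists[OF prof i n1] by auto
      have "t \<in> D n h h p" using top_in_Dh[of i h t n p] i t by blast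
      then have "t = x" using DD mh unfolding mu_def by auto
      then show "above (p i) x v" using t v lin_facts(3)[OF prof i, of x v] x unfolding above_def by auto
    qed
    then have "{i \<in> {1..h}. above (p i) x v} = {1..h}" by auto
    then have "?c x v = h" unfolding cnt_def by simp
    then show False using F3 v M'(2) by force
  qed
  have "card (?N - {x}) = n - 1" using x by simp
  consider "n = 2" | "n = 3" | "h = 2" | "n = 4" "h = 4" using T n2 by linarith
  then show False
  proof cases
    case 1
    then have "card (?N - {x}) = 1" using x by simp
    then obtain y where y: "?N - {x} = {y}" using card_1_singletonE by blast
    then have N: "?N = {x,y}" "x \<noteq> y" using x by blast+
    show False by (rule lem_n2[OF N(2) sum[unfolded N(1)] c0 F1[unfolded N(1)] F2[unfolded N(1)]
      F3[unfolded N(1)] F4[unfolded N(1)] M(1) M'(1) M'(2)])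
  next
    case 2
    then have "card (?N - {x}) = 2" using x by simp
    then obtain y z where y: "?N - {x} = {y,z}" "y \<noteq> z" unfolding card_2_iff by blast
    then have N: "?N = {x,y,z}" "x \<noteq> y" "x \<noteq> z" using x by blast+
    show False by (rule lem_n3[OF N(2,3) y(2) sum[unfolded N(1)] c0 F1[unfolded N(1)] F2[unfolded N(1)]
      F3[unfolded N(1)] F4[unfolded N(1)] M(1) M'(1) M'(2)])
  next
    case 3
    then show False using F6 M by linarith
  next
    case 4
    then have "card (?N - {x}) = 3" using x by simp
    then obtain y z w where y: "?N - {x} = {y,z,w}" "y \<noteq> z" "z \<noteq> w" "y \<noteq> w" unfolding card_3_iff by blast
    then have N: "?N = {x,y,z,w}" "x \<noteq> y" "x \<noteq> z" "x \<noteq> w" using x by blast+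
    have mu3: "mu = 3" using F6 M 4 by linarith
    have cyc: "\<forall>a\<in>?N. \<forall>b\<in>?N. \<forall>e\<in>?N. ?c a b + ?c b e + ?c e a \<le> 8"
      using cnt_cycle[OF prof] 4 by auto
    have d: "x \<noteq> y" "x \<noteq> z" "y \<noteq> z" "x \<noteq> w" "y \<noteq> w" "z \<noteq> w" using N y by auto
    show False using lem_n44[OF 4(2) d sum[unfolded N(1)] cyc[unfolded N(1)] c0 F1[unfolded N(1), unfolded mu3]
      F2[unfolded N(1), unfolded mu3] F3[unfolded N(1)] F4[unfolded N(1)] M'(1,2)] .
  qed
qed



lemma mod_pred:
  fixes s m :: nat
  assumes "s \<ge> 1" "s mod m \<noteq> 0"
  shows "(s - 1) mod m = s mod m - 1"
proof -
  obtain t where t: "s = Suc t" using assms(1) by (cases s) auto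
  show ?thesis using assms(2) unfolding t by (auto simp: mod_Suc)
qed

lemma mod_inj_interval:
  fixes i m a b :: nat
  assumes "1 \<le> a" "a \<le> m" "1 \<le> b" "b \<le> m" "(i + m - a) mod m = (i + m - b) mod m"
  shows "a = b"
proof (rule ccontr)
  assume ne: "a \<noteq> b"
  have m: "m > 0" using assms by auto
  {
    fix a b assume ab: "1 \<le> a" "a < b" "b \<le> m" "(i + m - a) mod m = (i + m - b) mod m"
    have e: "i + m - a = (i + m - b) + (b - a)" using ab by simp
    have "m dvd (b - a)" using ab(4) unfolding e using mod_eq_dvd_iff_nat[of "i + m - b" "i + m - b + (b - a)" m] by simp
    moreover have "0 < b - a" "b - a < m" using ab by auto
    ultimately have False using nat_dvd_not_less by blast
  }
  note * = this
  show False
  proof (cases "a < b")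
    case True then show False using *[of a b] assms by auto
  next
    case False then have "b < a" using ne by auto
    then show False using *[of b a] assms by auto
  qed
qed


definition util :: "nat \<Rightarrow> nat \<Rightarrow> nat \<Rightarrow> nat \<Rightarrow> nat" where
  "util n h i v = (if v = n then (if i \<le> h div 2 + 1 then n else 0) else (i + (n-1) - v) mod (n-1) + 1)"

definition cprof :: "nat \<Rightarrow> nat \<Rightarrow> nat \<Rightarrow> nat rel" where
  "cprof n h i = {(a,b). a \<in> {1..n} \<and> b \<in> {1..n} \<and> util n h i a \<le> util n h i b}"

lemma util_small: "n \<ge> 2 \<Longrightarrow> v \<noteq> n \<Longrightarrow> 1 \<le> util n h i v \<and> util n h i v \<le> n - 1"
  unfolding util_def by (auto simp: Suc_le_eq)

lemma util_inj:
  assumes "n \<ge> 2" "a \<in> {1..n}" "b \<in> {1..n}" "util n h i a = util n h i b"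
  shows "a = b"
proof (cases "a = n \<or> b = n")
  case True
  have un: "util n h i n = n \<or> util n h i n = 0" by (simp add: util_def)
  show ?thesis
  proof (rule ccontr)
    assume "a \<noteq> b"
    show False
    proof (cases "a = n")
      case True
      then have "b \<noteq> n" using \<open>a \<noteq> b\<close> by simp
      then have "1 \<le> util n h i b" "util n h i b \<le> n - 1" using util_small[OF assms(1), of b h i] by auto
      then show False using un assms(1,4) True by auto
    next
      case False
      then have "b = n" using \<open>a = n \<or> b = n\<close> by simp
      have "1 \<le> util n h i a" "util n h i a \<le> n - 1" using util_small[OF assms(1) False, of h i] by auto
      then show False using un assms(1,4) \<open>b = n\<close> by auto
    qed
  qed
next
  case False
  then have "a \<le> n - 1" "b \<le> n - 1" using assms(2,3) by auto
  moreover have "(i + (n-1) - a) mod (n-1) = (i + (n-1) - b) mod (n-1)"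
  proof -
    have "util n h i a = (i + (n-1) - a) mod (n-1) + 1" "util n h i b = (i + (n-1) - b) mod (n-1) + 1"
    proof -
      have "a \<noteq> n" "b \<noteq> n" using False by auto
      then show "util n h i a = (i + (n-1) - a) mod (n-1) + 1" "util n h i b = (i + (n-1) - b) mod (n-1) + 1"
        unfolding util_def by (simp_all only: if_False)
    qed
    then show ?thesis using assms(4) by linarith
  qed
  moreover have "1 \<le> a" "1 \<le> b" using assms(2,3) by auto
  ultimately show ?thesis by (intro mod_inj_interval[of a "n-1" b i]) assumption+
qed

lemma cprof_profile: assumes "n \<ge> 2" shows "is_profile n h (cprof n h)"
  unfolding is_profile_def
proof
  fix i assume "i \<in> {1..h}"
  let ?r = "cprof n h i"
  have "refl_on {1..n} ?r" unfolding refl_on_def cprof_def by auto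
  moreover have "trans ?r" unfolding trans_def cprof_def by auto
  moreover have "antisym ?r"
  proof (rule antisymI)
    fix x y assume "(x,y) \<in> ?r" "(y,x) \<in> ?r"
    then have "x \<in> {1..n}" "y \<in> {1..n}" "util n h i x = util n h i y" unfolding cprof_def by auto
    then show "x = y" using util_inj[OF assms] by blast
  qed
  moreover have "total_on {1..n} ?r" unfolding total_on_def cprof_def by auto
  moreover have "?r \<subseteq> {1..n} \<times> {1..n}" unfolding cprof_def by auto
  ultimately show "linear_order_on {1..n} ?r"
    unfolding linear_order_on_def partial_order_on_def preorder_on_def by blast
qed

lemma above_cprof:
  assumes "n \<ge> 2" "x \<in> {1..n}" "y \<in> {1..n}"
  shows "above (cprof n h i) y x \<longleftrightarrow> util n h i x < util n h i y"
proof
  assume "above (cprof n h i) y x"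
  then have "y \<noteq> x" "util n h i x \<le> util n h i y" unfolding above_def cprof_def by auto
  moreover have "util n h i x \<noteq> util n h i y" using util_inj[OF assms(1,2,3)] \<open>y \<noteq> x\<close> by auto
  ultimately show "util n h i x < util n h i y" by linarith
next
  assume l: "util n h i x < util n h i y"
  then have "y \<noteq> x" by auto
  then show "above (cprof n h i) y x" using l assms unfolding above_def cprof_def by auto
qed

lemma cnt_cprof:
  assumes "n \<ge> 2" "x \<in> {1..n}" "y \<in> {1..n}"
  shows "cnt h (cprof n h) y x = card {i \<in> {1..h}. util n h i x < util n h i y}"
  unfolding cnt_def using above_cprof[OF assms, of h] by presburger


lemma util_n: "util n h i n = (if i \<le> h div 2 + 1 then n else 0)"
  by (simp add: util_def)

lemma util_a: "a \<noteq> n \<Longrightarrow> util n h i a = (i + (n-1) - a) mod (n-1) + 1"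
  unfolding util_def by (simp only: if_False)

lemma cnt_n_a:
  assumes "n \<ge> 2" "h \<ge> 2" "a \<in> {1..n-1}"
  shows "cnt h (cprof n h) n a = h div 2 + 1"
proof -
  have an: "a \<noteq> n" "a \<in> {1..n}" using assms by auto
  have ua: "1 \<le> util n h i a" "util n h i a \<le> n - 1" for i using util_small[OF assms(1) an(1)] by auto
  have "{i \<in> {1..h}. util n h i a < util n h i n} = {1..h div 2 + 1}"
  proof (intro set_eqI iffI)
    fix i assume "i \<in> {i \<in> {1..h}. util n h i a < util n h i n}"
    then have "i \<in> {1..h}" "util n h i a < util n h i n" by auto
    then show "i \<in> {1..h div 2 + 1}" using ua[of i] unfolding util_n by (auto split: if_splits)
  next
    fix i assume i: "i \<in> {1..h div 2 + 1}"
    then have "i \<in> {1..h}" using assms(2) by auto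
    moreover have "util n h i a < util n h i n" using i ua[of i] assms(1) unfolding util_n by auto
    ultimately show "i \<in> {i \<in> {1..h}. util n h i a < util n h i n}" by auto
  qed
  then show ?thesis using cnt_cprof[OF assms(1) an(2), of n h] assms(1) by simp
qed

lemma next_lt:
  assumes "n \<ge> 3" "a \<in> {1..n-1}" "i \<ge> 1" "(i + (n-1) - a) mod (n-1) \<noteq> 0"
  shows "util n h i (if a = n - 1 then 1 else a + 1) < util n h i a"
proof (cases "a = n - 1")
  case False
  then have a1: "a + 1 \<noteq> n" "a \<noteq> n" using assms(2) by auto
  have s: "i + (n-1) - (a+1) = (i + (n-1) - a) - 1" by simp
  have "util n h i (a+1) = (i + (n-1) - a) mod (n-1) - 1 + 1"
    unfolding util_a[OF a1(1)] s using mod_pred[of "i + (n-1) - a" "n-1"] assms by auto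
  moreover have "util n h i a = (i + (n-1) - a) mod (n-1) + 1" using util_a[OF a1(2)] .
  ultimately show ?thesis using False assms(4) by simp
next
  case True
  then have a1: "(1::nat) \<noteq> n" "a \<noteq> n" using assms by auto
  have im: "i mod (n-1) \<noteq> 0" using assms(4) True by simp
  have e: "i + (n-1) - 1 = (i - 1) + (n-1)" using assms(3) by simp
  have "util n h i 1 = (i - 1) mod (n-1) + 1" unfolding util_a[OF a1(1)] e by simp
  also have "\<dots> = i mod (n-1) - 1 + 1" using mod_pred[OF assms(3) im] by simp
  finally have u1: "util n h i 1 = i mod (n - 1) - 1 + 1" .
  have "i + (n - 1) - a = i" using True by simp
  then have ua: "util n h i a = i mod (n-1) + 1" using util_a[OF a1(2)] by simp
  have ifv: "(if a = n - 1 then 1 else a+1) = (1::nat)" using True by simp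
  show ?thesis unfolding ifv using u1 ua im by linarith
qed

lemma card_mod_bound:
  fixes m a h :: nat
  assumes "m > 0" "a \<le> m"
  shows "card {i \<in> {1..h}. (i + m - a) mod m = 0} \<le> (h - 1) div m + 1"
proof -
  let ?S = "{i \<in> {1..h}. (i + m - a) mod m = 0}"
  have "inj_on (\<lambda>i. (i - 1) div m) ?S"
  proof (rule inj_onI)
    fix i j assume i: "i \<in> ?S" and j: "j \<in> ?S" and e: "(i - 1) div m = (j - 1) div m"
    {
      fix i j assume i: "i \<in> ?S" and j: "j \<in> ?S" and e: "(i - 1) div m = (j - 1) div m" and le: "i \<le> j"
      have di: "m dvd (i + m - a)" "m dvd (j + m - a)" using i j by (simp_all add: dvd_eq_mod_eq_0)
      have ij1: "i \<ge> 1" "j \<ge> 1" using i j by simp_all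
      have "m dvd (j + m - a) - (i + m - a)" using dvd_diff_nat[OF di(2) di(1)] .
      moreover have "(j + m - a) - (i + m - a) = j - i" using le assms(2) by simp
      ultimately have dv: "m dvd j - i" by simp
      have A: "m * ((j-1) div m) + (j-1) mod m = j - 1" by (rule mult_div_mod_eq)
      have B: "m * ((i-1) div m) + (i-1) mod m = i - 1" by (rule mult_div_mod_eq)
      have B': "m * ((j-1) div m) + (i-1) mod m = i - 1" using B unfolding e .
      have "(j-1) mod m < m" using assms(1) by simp
      then have "j - 1 - (i - 1) < m" using A B' by linarith
      then have lt: "j - i < m" using ij1 by linarith
      have "\<not> (0 < j - i)" using nat_dvd_not_less[of "j-i" m] dv lt by blast
      then have "i = j" using le by linarith
    }
    note * = this
    show "i = j"
    proof (cases "i \<le> j")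
      case True then show ?thesis using *[OF i j e] by blast
    next
      case False then have "j \<le> i" by simp
      then show ?thesis using *[OF j i e[symmetric]] by simp
    qed
  qed
  moreover have "(\<lambda>i. (i - 1) div m) ` ?S \<subseteq> {0..(h-1) div m}"
  proof
    fix k assume "k \<in> (\<lambda>i. (i - 1) div m) ` ?S"
    then obtain i where ki: "k = (i - 1) div m" and i: "i \<in> ?S" by (rule imageE)
    from i have "i \<le> h" by (simp only: mem_Collect_eq atLeastAtMost_iff)
    then have "i - 1 \<le> h - 1" by linarith
    then have "k \<le> (h-1) div m" unfolding ki by (rule div_le_mono)
    then show "k \<in> {0..(h-1) div m}" by simp
  qed
  ultimately have "card ?S \<le> card {0..(h-1) div m}" by (rule card_inj_on_le) simp
  then show ?thesis by simp
qed

lemma arith_bound: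
  fixes h m :: nat
  assumes "h \<ge> 3" "m \<ge> 3" "h = 4 \<longrightarrow> m \<ge> 4"
  shows "(h - 1) div m + 1 \<le> h - (h div 2 + 1)"
proof (cases "h = 4")
  case True
  then have "(h - 1) div m = 0" using assms by simp
  then show ?thesis using True by simp
next
  case False
  have "(h - 1) div m \<le> (h - 1) div 3" by (intro div_le_mono2) (use assms(2) in auto)
  moreover have "(h - 1) div 3 + 1 \<le> h - (h div 2 + 1)" using False assms(1) by presburger
  ultimately show ?thesis by linarith
qed


lemma cnt_next:
  assumes n: "n \<ge> 4" and h: "h \<ge> 3" and nh: "h = 4 \<longrightarrow> n \<ge> 5" and a: "a \<in> {1..n-1}"
  shows "h div 2 + 1 \<le> cnt h (cprof n h) a (if a = n - 1 then 1 else a + 1)"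
proof -
  define b where "b = (if a = n - 1 then 1 else a + 1)"
  have n2: "n \<ge> 2" using n by simp
  have aN: "a \<in> {1..n}" and bN: "b \<in> {1..n}" and ab: "a \<noteq> b" using a n unfolding b_def by auto
  have sub: "{i \<in> {1..h}. util n h i a < util n h i b} \<subseteq> {i \<in> {1..h}. (i + (n-1) - a) mod (n-1) = 0}"
  proof
    fix i assume "i \<in> {i \<in> {1..h}. util n h i a < util n h i b}"
    then have i: "i \<in> {1..h}" "util n h i a < util n h i b" by auto
    have "(i + (n-1) - a) mod (n-1) = 0"
    proof (rule ccontr)
      assume "(i + (n-1) - a) mod (n-1) \<noteq> 0"
      then have "util n h i b < util n h i a" unfolding b_def using next_lt[of n a i h] n a i(1) by auto
      then show False using i(2) by linarith
    qed
    then show "i \<in> {i \<in> {1..h}. (i + (n-1) - a) mod (n-1) = 0}" using i(1) by blast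
  qed
  have "cnt h (cprof n h) b a = card {i \<in> {1..h}. util n h i a < util n h i b}"
    by (rule cnt_cprof[OF n2 aN bN])
  also have "\<dots> \<le> card {i \<in> {1..h}. (i + (n-1) - a) mod (n-1) = 0}"
    by (rule card_mono[OF _ sub]) simp
  also have "\<dots> \<le> (h - 1) div (n-1) + 1"
    by (rule card_mod_bound) (use a n in auto)
  also have "\<dots> \<le> h - (h div 2 + 1)"
    by (rule arith_bound) (use n h nh in auto)
  finally have "cnt h (cprof n h) b a \<le> h - (h div 2 + 1)" .
  moreover have "cnt h (cprof n h) b a + cnt h (cprof n h) a b = h"
    by (rule cnt_sum[OF cprof_profile[OF n2] aN bN ab])
  moreover have "h div 2 + 1 \<le> h" using h by linarith
  ultimately show ?thesis unfolding b_def[symmetric] by linarith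
qed

lemma construct:
  assumes n: "n \<ge> 4" and h: "h \<ge> 3" and nh: "\<not> (h = 4 \<and> n = 4)"
  shows "\<exists>p x. is_profile n h p \<and> x \<in> {1..n} \<and>
            D n h (mu_of n h p) p = {x} \<and>
            {x} \<subseteq> D n h (mu_of n h (rev_profile p)) (rev_profile p)"
proof -
  define P where "P = cprof n h"
  define q where "q = h div 2 + 1"
  have n2: "n \<ge> 2" and n1: "n \<ge> 1" and h1: "h \<ge> 1" and h2: "h \<ge> 2" using n h by auto
  have prof: "is_profile n h P" unfolding P_def by (rule cprof_profile[OF n2])
  have nN: "n \<in> {1..n}" using n by simp
  have qh: "q < h" "h < 2*q" unfolding q_def using h by auto
  have cna: "cnt h P n a = q" if "a \<in> {1..n-1}" for a
    unfolding P_def q_def by (rule cnt_n_a[OF n2 h2 that])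
  have can: "cnt h P a n = h - q" if "a \<in> {1..n-1}" for a
  proof -
    have "a \<in> {1..n}" "a \<noteq> n" using that by auto
    then have "cnt h P a n + cnt h P n a = h" using cnt_sum[OF prof nN] by simp
    then show ?thesis using cna[OF that] by simp
  qed
  have c0: "cnt h P v v = 0" for v by (simp add: cnt_def above_def)
  have other: "v \<in> {1..n} \<Longrightarrow> v \<noteq> n \<Longrightarrow> v \<in> {1..n-1}" for v by auto
  have Dq: "D n h q P = {n}"
  proof (intro set_eqI iffI)
    fix v assume v: "v \<in> D n h q P"
    then have vN: "v \<in> {1..n}" "\<forall>y\<in>{1..n}. cnt h P y v < q" unfolding D_cnt by auto
    show "v \<in> {n}"
    proof (rule ccontr)
      assume "v \<notin> {n}"
      then have "v \<in> {1..n-1}" using vN(1) by auto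
      then have "cnt h P n v = q" by (rule cna)
      then show False using vN(2) nN by force
    qed
  next
    fix v assume "v \<in> {n}"
    then have vn: "v = n" by simp
    have "\<forall>y\<in>{1..n}. cnt h P y n < q"
    proof
      fix y assume y: "y \<in> {1..n}"
      show "cnt h P y n < q"
      proof (cases "y = n")
        case True then show ?thesis using c0 qh by simp
      next
        case False then show ?thesis using can[OF other[OF y False]] qh by simp
      qed
    qed
    then show "v \<in> D n h q P" unfolding D_cnt vn using nN by blast
  qed
  have muP: "mu_of n h P = q"
    unfolding mu_of_def
  proof (rule Least_equality)
    show "h < 2 * q \<and> q \<le> h \<and> D n h q P \<noteq> {}" using qh Dq by simp
  next
    fix y assume "h < 2 * y \<and> y \<le> h \<and> D n h y P \<noteq> {}"
    then have "h < 2 * y" by simp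
    then show "q \<le> y" unfolding q_def by presburger
  qed
  have Dqr: "D n h q (rev_profile P) = {}"
  proof -
    have "\<exists>y\<in>{1..n}. q \<le> cnt h P z y" if z: "z \<in> {1..n}" for z
    proof (cases "z = n")
      case True
      have "(1::nat) \<in> {1..n-1}" using n by simp
      then show ?thesis using cna True n by (intro bexI[of _ 1]) auto
    next
      case False
      then have za: "z \<in> {1..n-1}" using z by auto
      have "(if z = n - 1 then 1 else z + 1) \<in> {1..n}" using za by auto
      moreover have "q \<le> cnt h P z (if z = n - 1 then 1 else z + 1)"
        unfolding P_def q_def by (rule cnt_next[OF n h _ za]) (use nh n in auto)
      ultimately show ?thesis by blast
    qed
    then show ?thesis unfolding D_rev by (auto simp: not_less)
  qed
  define mu' where "mu' = mu_of n h (rev_profile P)"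
  note M' = mu_props[OF rev_prof[OF prof] n1 h1, folded mu'_def]
  have "mu' \<noteq> q" using M'(3) Dqr by auto
  moreover have "q \<le> mu'" using M'(1) unfolding q_def by presburger
  ultimately have qm: "q < mu'" by simp
  have "n \<in> D n h mu' (rev_profile P)"
  proof -
    have "\<forall>y\<in>{1..n}. cnt h P n y < mu'"
    proof
      fix y assume y: "y \<in> {1..n}"
      show "cnt h P n y < mu'"
      proof (cases "y = n")
        case True then show ?thesis using c0 qm by simp
      next
        case False then show ?thesis using cna[OF other[OF y False]] qm by simp
      qed
    qed
    then show ?thesis unfolding D_rev using nN by blast
  qed
  then show ?thesis using prof nN Dq muP unfolding mu'_def by (intro exI[of _ P] exI[of _ n]) auto
qed


theorem proposition4:
  fixes n h :: nat
  assumes "n \<ge> 2" and "h \<ge> 2"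
  shows "(\<exists>p x. is_profile n h p \<and> x \<in> {1..n} \<and>
            D n h (mu_of n h p) p = {x} \<and>
            {x} \<subseteq> D n h (mu_of n h (rev_profile p)) (rev_profile p))
         \<longleftrightarrow> \<not> (h = 2 \<or> n \<le> 3 \<or> (h = 4 \<and> n = 4))"
proof
  assume "\<exists>p x. is_profile n h p \<and> x \<in> {1..n} \<and>
            D n h (mu_of n h p) p = {x} \<and>
            {x} \<subseteq> D n h (mu_of n h (rev_profile p)) (rev_profile p)"
  then obtain p x where "is_profile n h p" "x \<in> {1..n}" "D n h (mu_of n h p) p = {x}"
    "{x} \<subseteq> D n h (mu_of n h (rev_profile p)) (rev_profile p)" by blast
  then show "\<not> (h = 2 \<or> n \<le> 3 \<or> (h = 4 \<and> n = 4))"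
    using impossible[of n h p x] assms by blast
next
  assume "\<not> (h = 2 \<or> n \<le> 3 \<or> (h = 4 \<and> n = 4))"
  then have "n \<ge> 4" "h \<ge> 3" "\<not> (h = 4 \<and> n = 4)" using assms by auto
  then show "\<exists>p x. is_profile n h p \<and> x \<in> {1..n} \<and>
            D n h (mu_of n h p) p = {x} \<and>
            {x} \<subseteq> D n h (mu_of n h (rev_profile p)) (rev_profile p)"
    by (rule construct)
qed

end
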